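(* Let $n\ge d$, $\mathbf X\in\mathbb R^{n\times d}$ with full column rank, $1\le k<d$, $\lambda>0$, and $\mathbf y\in\mathbb R^n$ with $\hat\sigma_{1:k}=\|(\mathbf I-\mathbf P_{-1:k})\mathbf y\|>0$; let $\hat{\mathbf y}_{1:k}=\mathbf P_{-1:k}\mathbf y$, $\mathbf u=\mathbf V^T(\mathbf y-\hat{\mathbf y}_{1:k})/\hat\sigma_{1:k}$, and let $\hat{\boldsymbol\beta}^\lambda=\arg\min_{\boldsymbol\beta\in\mathbb R^d}\big(\frac1{2n}\|\mathbf y-\mathbf X\boldsymbol\beta\|_2^2+\lambda(\|\boldsymbol\beta_{1:k}\|_2+\|\boldsymbol\beta_{-1:k}\|_1)\big)$. For $\mathbf b\in\mathbb R^k$ and $\boldsymbol\epsilon$ in the closed unit ball of $\mathbb R^k$ define $$\hat{\boldsymbol\beta}^\lambda_{-1:k}(\mathbf b)=\arg\min_{\boldsymbol\gamma\in\mathbb R^{d-k}}\Big(\tfrac1{2n}\|\mathbf y-\mathbf X_{1:k}\mathbf b-\mathbf X_{-1:k}\boldsymbol\gamma\|_2^2+\lambda\|\boldsymbol\gamma\|_1\Big),$$ $$\Lambda_{1:k}(\mathbf b,\boldsymbol\epsilon)=\frac1{\hat\sigma_{1:k}}(\mathbf X_{1:k}^T\mathbf V_{1:k})^{-1}\Big(-\mathbf X_{1:k}^T\big(\hat{\mathbf y}_{1:k}-\mathbf X_{1:k}\mathbf b-\mathbf X_{-1:k}\hat{\boldsymbol\beta}^\lambda_{-1:k}(\mathbf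 b)\big)+n\lambda\boldsymbol\epsilon\Big),$$ and let $f^{-1}(\mathbf b)=\{\Lambda_{1:k}(\mathbf b,\mathbf b/\|\mathbf b\|)\}$ if $\mathbf b\ne\mathbf 0$ and $f^{-1}(\mathbf 0)=\{\Lambda_{1:k}(\mathbf 0,\boldsymbol\epsilon):\|\boldsymbol\epsilon\|\le1\}$. Then the function $f:\mathbb R^k\to\mathbb R^k$ with this inverse satisfies $\hat{\boldsymbol\beta}^\lambda_{1:k}=f(\mathbf u_{1:k})$; i.e., for every $\mathbf b\in\mathbb R^k$, $\hat{\boldsymbol\beta}^\lambda_{1:k}=\mathbf b$ if and only if $\mathbf u_{1:k}\in f^{-1}(\mathbf b)$.
   Context: $\mathbf A_i$, $\mathbf A_{1:i}$, $\mathbf A_{-1:i}$ denote the $i$-th column, first $i$ columns, and submatrix with first $i$ columns removed (similarly for vector entries). $\mathbf P_{-1:i}$ is the orthogonal projection onto the column space of $\mathbf X_{-1:i}$. $\mathbf V\in\mathbb R^{n\times(n-d+k)}$ has orthonormal columns spanning the orthogonal complement of the column space of $\mathbf X_{-1:k}$, with first $k$ columns $\mathbf V_i=(\mathbf I-\mathbf P_{-1:i})\mathbf X_i/\|(\mathbf I-\mathbf P_{-1:i})\mathbf X_i\|$. Both minimizers above are unique since $\mathbf X$ and $\mathbf X_{-1:k}$ have full column rank. *)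

theory Defs
  imports "HOL-Analysis.Analysis"
begin

text \<open>Column index set of X is the sum type 'k + 'm: Inl i are the first k columns
  (ordered by the well-order of 'k), Inr j are the remaining d - k columns.\<close>

definition blk1 :: "real^('k::finite + 'm::finite)^'n \<Rightarrow> real^'k^'n" where
  "blk1 X = (\<chi> r i. X $ r $ Inl i)"

definition blk2 :: "real^('k::finite + 'm::finite)^'n \<Rightarrow> real^'m^'n" where
  "blk2 X = (\<chi> r j. X $ r $ Inr j)"

definition vfst :: "real^('k::finite + 'm::finite) \<Rightarrow> real^'k" where
  "vfst \<beta> = (\<chi> i. \<beta> $ Inl i)"

definition vsnd :: "real^('k::finite + 'm::finite) \<Rightarrow> real^'m" where
  "vsnd \<beta> = (\<chi> j. \<beta> $ Inr j)"

definition l1norm :: "real^'m::finite \<Rightarrow> real" where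
  "l1norm \<gamma> = (\<Sum>j\<in>UNIV. \<bar>\<gamma> $ j\<bar>)"

definition oproj :: "(real^'n::finite) set \<Rightarrow> real^'n \<Rightarrow> real^'n" where
  "oproj S y = closest_point (span S) y"

definition Pk :: "real^('k::finite + 'm::finite)^'n::finite \<Rightarrow> real^'n \<Rightarrow> real^'n" where
  "Pk X = oproj {column (Inr j) X | j. True}"

text \<open>P_{-1:i} for i in the first block: projection onto the span of the columns of X
  with the first i columns (those Inl j with j \<le> i) removed.\<close>
definition Pminus :: "real^('k::{finite,wellorder} + 'm::finite)^'n::finite \<Rightarrow> 'k::{finite,wellorder} \<Rightarrow> real^'n \<Rightarrow> real^'n" where
  "Pminus X i = oproj ({column (Inr j) X | j. True} \<union> {column (Inl j) X | j. i < j})"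

definition Vcol :: "real^('k::{finite,wellorder} + 'm::finite)^'n::finite \<Rightarrow> 'k::{finite,wellorder} \<Rightarrow> real^'n" where
  "Vcol X i = (let w = column (Inl i) X - Pminus X i (column (Inl i) X) in (1 / norm w) *\<^sub>R w)"

definition V1 :: "real^('k::{finite,wellorder} + 'm::finite)^'n::finite \<Rightarrow> real^'k::{finite,wellorder}^'n" where
  "V1 X = (\<chi> r i. Vcol X i $ r)"

definition lasso_obj :: "real^('k::finite + 'm::finite)^'n::finite \<Rightarrow> real^'n \<Rightarrow> real \<Rightarrow> real^('k + 'm) \<Rightarrow> real" where
  "lasso_obj X y lam \<beta> = 1 / (2 * real CARD('n)) * (norm (y - X *v \<beta>))\<^sup>2
      + lam * (norm (vfst \<beta>) + l1norm (vsnd \<beta>))"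

definition sub_obj :: "real^('k::finite + 'm::finite)^'n::finite \<Rightarrow> real^'n \<Rightarrow> real \<Rightarrow> real^'k \<Rightarrow> real^'m \<Rightarrow> real" where
  "sub_obj X y lam b \<gamma> = 1 / (2 * real CARD('n)) * (norm (y - blk1 X *v b - blk2 X *v \<gamma>))\<^sup>2
      + lam * l1norm \<gamma>"

definition sigk :: "real^('k::finite + 'm::finite)^'n::finite \<Rightarrow> real^'n \<Rightarrow> real" where
  "sigk X y = norm (y - Pk X y)"

text \<open>Lambda_{1:k}(b, eps), with g b = hat beta_{-1:k}(b).\<close>
definition Lam :: "real^('k::{finite,wellorder} + 'm::finite)^'n::finite \<Rightarrow> real^'n \<Rightarrow> real
    \<Rightarrow> (real^'k::{finite,wellorder} \<Rightarrow> real^'m) \<Rightarrow> real^'k::{finite,wellorder} \<Rightarrow> real^'k::{finite,wellorder} \<Rightarrow> real^'k::{finite,wellorder}" where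
  "Lam X y lam g b \<epsilon> = (1 / sigk X y) *\<^sub>R
     (matrix_inv (transpose (blk1 X) ** V1 X) *v
       (- (transpose (blk1 X) *v (Pk X y - blk1 X *v b - blk2 X *v g b))
        + (real CARD('n) * lam) *\<^sub>R \<epsilon>))"

definition finv :: "real^('k::{finite,wellorder} + 'm::finite)^'n::finite \<Rightarrow> real^'n \<Rightarrow> real
    \<Rightarrow> (real^'k::{finite,wellorder} \<Rightarrow> real^'m) \<Rightarrow> real^'k::{finite,wellorder} \<Rightarrow> (real^'k::{finite,wellorder}) set" where
  "finv X y lam g b = (if b \<noteq> 0 then {Lam X y lam g b ((1 / norm b) *\<^sub>R b)}
                        else {Lam X y lam g 0 \<epsilon> | \<epsilon>. norm \<epsilon> \<le> 1})"

definition u1 :: "real^('k::{finite,wellorder} + 'm::finite)^'n::finite \<Rightarrow> real^'n \<Rightarrow> real^'k::{finite,wellorder}" where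
  "u1 X y = (1 / sigk X y) *\<^sub>R (transpose (V1 X) *v (y - Pk X y))"

end

theory Submission
  imports Defs
begin

lemma oproj_in: "oproj S y \<in> span S"
  unfolding oproj_def by (rule closest_point_in_set) (auto simp: span_zero[THEN ex_in_conv[THEN iffD1, OF exI]])

lemma oproj_orth:
  assumes "s \<in> span S" shows "inner (y - oproj S y) s = 0"
proof -
  let ?p = "oproj S y"
  have cv: "convex (span S)" by (simp add: subspace_imp_convex)
  have ne: "span S \<noteq> {}" using span_zero by blast
  have p: "?p \<in> span S" by (rule oproj_in)
  have le: "\<forall>z\<in>span S. dist y ?p \<le> dist y z"
    unfolding oproj_def using closest_point_exists(2)[OF closed_span ne] by blast
  have "?p + s \<in> span S" "?p - s \<in> span S" using p assms by (auto intro: span_add span_diff)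
  from any_closest_point_dot[OF cv closed_span p this(1) le] any_closest_point_dot[OF cv closed_span p this(2) le]
  show ?thesis by (simp add: inner_minus_right)
qed

lemma span_cols:
  fixes X :: "real^'c::finite^'n::finite"
  assumes "v \<in> span {column c X | c. c \<in> C}"
  shows "\<exists>a. (\<forall>c. c \<notin> C \<longrightarrow> a$c = 0) \<and> v = X *v a"
proof -
  let ?T = "{X *v a | a. \<forall>c. c \<notin> C \<longrightarrow> a$c = 0}"
  have "subspace ?T"
    unfolding subspace_def
  proof (intro conjI ballI allI)
    show "0 \<in> ?T" by (rule CollectI, rule exI[of _ 0]) simp
  next
    fix x y assume "x \<in> ?T" "y \<in> ?T"
    then obtain a b where "\<forall>c. c \<notin> C \<longrightarrow> a$c = 0" "x = X *v a" "\<forall>c. c \<notin> C \<longrightarrow> b$c = 0" "y = X *v b" by blast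
    then show "x + y \<in> ?T" by (intro CollectI exI[of _ "a+b"]) (simp add: matrix_vector_right_distrib)
  next
    fix r :: real and x assume "x \<in> ?T"
    then obtain a where "\<forall>c. c \<notin> C \<longrightarrow> a$c = 0" "x = X *v a" by blast
    then show "r *\<^sub>R x \<in> ?T" by (intro CollectI exI[of _ "r *\<^sub>R a"]) (simp add: matrix_vector_mult_scaleR)
  qed
  moreover have "{column c X | c. c \<in> C} \<subseteq> ?T"
  proof
    fix v assume "v \<in> {column c X | c. c \<in> C}"
    then obtain c where "c \<in> C" "v = column c X" by blast
    moreover have "\<forall>c'. c' \<notin> C \<longrightarrow> axis c 1 $ c' = (0::real)" using \<open>c \<in> C\<close> by (auto simp: axis_def)
    ultimately show "v \<in> ?T" by (intro CollectI exI[of _ "axis c 1"]) (simp add: matrix_vector_mult_basis)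
  qed
  ultimately have "span {column c X | c. c \<in> C} \<subseteq> ?T" by (rule span_minimal[rotated])
  then show ?thesis using assms by blast
qed


definition Sset :: "real^('k::{finite,wellorder} + 'm::finite)^'n::finite \<Rightarrow> 'k \<Rightarrow> (real^'n) set" where
  "Sset X i = {column (Inr j) X | j. True} \<union> {column (Inl j) X | j. i < j}"

definition wvec :: "real^('k::{finite,wellorder} + 'm::finite)^'n::finite \<Rightarrow> 'k \<Rightarrow> real^'n" where
  "wvec X i = column (Inl i) X - oproj (Sset X i) (column (Inl i) X)"

lemma Pminus_eq: "Pminus X i = oproj (Sset X i)"
  by (simp add: Pminus_def Sset_def)

lemma Vcol_eq: "Vcol X i = (1 / norm (wvec X i)) *\<^sub>R wvec X i"
  by (simp add: Vcol_def wvec_def Pminus_eq Let_def)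

lemma Sset_eq: "Sset X i = {column c X | c. c \<in> range Inr \<union> Inl ` {j. i < j}}"
  unfolding Sset_def by blast

lemma wvec_nz:
  fixes X :: "real^('k::{finite,wellorder} + 'm::finite)^'n::finite"
  assumes inj: "inj ((*v) X)"
  shows "wvec X i \<noteq> 0"
proof
  assume "wvec X i = 0"
  then have "column (Inl i) X \<in> span (Sset X i)"
    using oproj_in[of "Sset X i" "column (Inl i) X"] by (simp add: wvec_def)
  then obtain a where a: "\<forall>c. c \<notin> range Inr \<union> Inl ` {j. i < j} \<longrightarrow> a$c = 0" "column (Inl i) X = X *v a"
    using span_cols unfolding Sset_eq by blast
  have "X *v a = X *v axis (Inl i) 1" using a(2) by (simp add: matrix_vector_mult_basis)
  with inj have "a = axis (Inl i) 1" by (simp add: inj_eq)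
  moreover have "a $ Inl i = 0" using a(1) by auto
  ultimately show False by (simp add: axis_def)
qed

lemma Vcol_orth:
  assumes "s \<in> span (Sset X i)" shows "inner (Vcol X i) s = 0"
  using oproj_orth[OF assms] by (simp add: Vcol_eq wvec_def)

lemma Vcol_norm:
  fixes X :: "real^('k::{finite,wellorder} + 'm::finite)^'n::finite"
  assumes inj: "inj ((*v) X)"
  shows "norm (Vcol X i) = 1"
  using wvec_nz[OF inj, of i] by (simp add: Vcol_eq)

lemma col_diag:
  fixes X :: "real^('k::{finite,wellorder} + 'm::finite)^'n::finite"
  assumes inj: "inj ((*v) X)"
  shows "inner (column (Inl i) X) (Vcol X i) = norm (wvec X i)"
proof -
  let ?p = "oproj (Sset X i) (column (Inl i) X)"
  have x: "column (Inl i) X = wvec X i + ?p" by (simp add: wvec_def)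
  have "inner ?p (Vcol X i) = 0" using Vcol_orth[OF oproj_in] by (simp add: inner_commute)
  then have "inner (column (Inl i) X) (Vcol X i) = inner (wvec X i) (Vcol X i)"
    by (subst x) (simp add: inner_add_left)
  also have "\<dots> = norm (wvec X i)"
    using wvec_nz[OF inj, of i] by (simp add: Vcol_eq power2_norm_eq_inner[symmetric] power2_eq_square)
  finally show ?thesis .
qed

lemma Sset_mono: "i < j \<Longrightarrow> Sset X j \<subseteq> Sset X i"
  unfolding Sset_def by auto

lemma col_in_Sset: "i < j \<Longrightarrow> column (Inl j) X \<in> Sset X i" "column (Inr l) X \<in> Sset X i"
  unfolding Sset_def by auto

lemma Vcol_in_span:
  assumes "i < j" shows "Vcol X j \<in> span (Sset X i)"
proof -
  have "column (Inl j) X \<in> span (Sset X i)" using col_in_Sset(1)[OF assms] by (rule span_base)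
  moreover have "oproj (Sset X j) (column (Inl j) X) \<in> span (Sset X i)"
    using oproj_in span_mono[OF Sset_mono[OF assms]] by blast
  ultimately show ?thesis unfolding Vcol_eq wvec_def by (intro span_mul span_diff)
qed

lemma Vcol_orthonormal:
  fixes X :: "real^('k::{finite,wellorder} + 'm::finite)^'n::finite"
  assumes inj: "inj ((*v) X)"
  shows "inner (Vcol X i) (Vcol X j) = (if i = j then 1 else 0)"
proof (cases "i = j")
  case True then show ?thesis using Vcol_norm[OF inj, of j] by (simp add: power2_norm_eq_inner[symmetric])
next
  case False
  then consider "i < j" | "j < i" using neq_iff by blast
  then show ?thesis
  proof cases
    case 1 then show ?thesis using Vcol_orth[OF Vcol_in_span[OF 1]] False by simp
  next
    case 2 then show ?thesis using Vcol_orth[OF Vcol_in_span[OF 2]] False by (simp add: inner_commute)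
  qed
qed


lemma M_entry: "(transpose (blk1 X) ** V1 X)$i$j = inner (column (Inl i) X) (Vcol X j)"
  by (simp add: matrix_matrix_mult_def transpose_def blk1_def V1_def inner_vec_def column_def)

lemma M_lower:
  assumes "j < i" shows "(transpose (blk1 X) ** V1 X)$i$j = 0"
  using Vcol_orth[OF span_base[OF col_in_Sset(1)[OF assms]]] by (simp add: M_entry inner_commute)

lemma M_ker:
  fixes X :: "real^('k::{finite,wellorder} + 'm::finite)^'n::finite"
  assumes inj: "inj ((*v) X)" and Mv: "(transpose (blk1 X) ** V1 X) *v v = 0"
  shows "v = 0"
proof (rule ccontr)
  let ?M = "transpose (blk1 X) ** V1 X"
  assume "v \<noteq> 0"
  then have ne: "{j. v$j \<noteq> 0} \<noteq> {}" by (auto simp: vec_eq_iff)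
  define i where "i = Max {j. v$j \<noteq> 0}"
  have vi: "v$i \<noteq> 0" using Max_in[OF finite ne] by (simp add: i_def)
  have big: "v$j = 0" if "i < j" for j
  proof (rule ccontr)
    assume "v$j \<noteq> 0" then have "j \<le> i" unfolding i_def by (intro Max_ge) auto
    with that show False by simp
  qed
  have "(?M *v v)$i = (\<Sum>j\<in>UNIV. ?M$i$j * v$j)" by (simp add: matrix_vector_mult_def)
  also have "\<dots> = (\<Sum>j\<in>UNIV. if j = i then ?M$i$i * v$i else 0)"
  proof (rule sum.cong[OF refl])
    fix j show "?M$i$j * v$j = (if j = i then ?M$i$i * v$i else 0)"
      using M_lower[of j i X] big[of j] by (cases "j = i") (auto simp: neq_iff)
  qed
  also have "\<dots> = ?M$i$i * v$i" by simp
  finally have "?M$i$i * v$i = 0" using Mv by simp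
  moreover have "?M$i$i \<noteq> 0" using col_diag[OF inj] wvec_nz[OF inj] by (simp add: M_entry)
  ultimately show False using vi by simp
qed

lemma M_inv:
  fixes X :: "real^('k::{finite,wellorder} + 'm::finite)^'n::finite"
  assumes inj: "inj ((*v) X)"
  shows "invertible (transpose (blk1 X) ** V1 X)"
  using M_ker[OF inj] by (simp add: invertible_left_inverse matrix_left_invertible_ker)

lemma VVt: "V1 X *v (transpose (V1 X) *v w) = (\<Sum>j\<in>UNIV. inner (Vcol X j) w *\<^sub>R Vcol X j)"
  by (simp add: vec_eq_iff matrix_vector_mult_def V1_def transpose_def inner_vec_def sum_component mult.commute)

lemma L1:
  fixes X :: "real^('k::{finite,wellorder} + 'm::finite)^'n::finite"
  assumes inj: "inj ((*v) X)" and w: "\<And>j. inner w (column (Inr j) X) = 0"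
  shows "(transpose (blk1 X) ** V1 X) *v (transpose (V1 X) *v w) = transpose (blk1 X) *v w"
proof -
  define z where "z = w - (\<Sum>j\<in>UNIV. inner (Vcol X j) w *\<^sub>R Vcol X j)"
  have zV: "inner z (Vcol X i) = 0" for i
  proof -
    have "inner z (Vcol X i) = inner w (Vcol X i) - (\<Sum>j\<in>UNIV. inner (Vcol X j) w * inner (Vcol X j) (Vcol X i))"
      by (simp add: z_def inner_diff_left inner_sum_left)
    also have "(\<Sum>j\<in>UNIV. inner (Vcol X j) w * inner (Vcol X j) (Vcol X i)) = inner (Vcol X i) w"
    proof -
      have "(\<Sum>j\<in>UNIV. inner (Vcol X j) w * inner (Vcol X j) (Vcol X i)) = (\<Sum>j\<in>UNIV. if j = i then inner (Vcol X i) w else 0)"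
        by (rule sum.cong) (auto simp: Vcol_orthonormal[OF inj])
      then show ?thesis by simp
    qed
    finally show ?thesis by (simp add: inner_commute)
  qed
  have zR: "inner z (column (Inr l) X) = 0" for l
  proof -
    have "inner (Vcol X j) (column (Inr l) X) = 0" for j
      by (rule Vcol_orth[OF span_base[OF col_in_Sset(2)]])
    then show ?thesis by (simp add: z_def inner_diff_left inner_sum_left w)
  qed
  have zL: "inner z (column (Inl i) X) = 0" for i
  proof (rule ccontr)
    assume "inner z (column (Inl i) X) \<noteq> 0"
    then have ne: "{j. inner z (column (Inl j) X) \<noteq> 0} \<noteq> {}" by auto
    define i0 where "i0 = Max {j. inner z (column (Inl j) X) \<noteq> 0}"
    have nz: "inner z (column (Inl i0) X) \<noteq> 0" using Max_in[OF finite ne] by (simp add: i0_def)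
    have big: "inner z (column (Inl j) X) = 0" if "i0 < j" for j
    proof (rule ccontr)
      assume "inner z (column (Inl j) X) \<noteq> 0" then have "j \<le> i0" unfolding i0_def by (intro Max_ge) auto
      with that show False by simp
    qed
    have "\<forall>s\<in>Sset X i0. orthogonal z s" using big zR unfolding Sset_def orthogonal_def by auto
    then have "orthogonal z (oproj (Sset X i0) (column (Inl i0) X))"
      using orthogonal_to_span[OF oproj_in] by blast
    moreover have "inner z (wvec X i0) = 0"
      using zV[of i0] wvec_nz[OF inj, of i0] by (simp add: Vcol_eq)
    moreover have "column (Inl i0) X = wvec X i0 + oproj (Sset X i0) (column (Inl i0) X)"
      by (simp add: wvec_def)
    ultimately have "inner z (column (Inl i0) X) = 0"
      by (metis inner_add_right orthogonal_def add.right_neutral)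
    with nz show False by simp
  qed
  have "transpose (blk1 X) *v z = 0"
    using zL by (simp add: vec_eq_iff matrix_vector_mult_def transpose_def blk1_def inner_vec_def column_def mult.commute)
  moreover have "V1 X *v (transpose (V1 X) *v w) = w - z" by (simp only: VVt z_def) simp
  ultimately show ?thesis
    by (simp del: transpose_matrix_vector add: matrix_vector_mul_assoc[symmetric] matrix_vector_mult_diff_distrib)
qed

definition ejoin :: "real^'k::finite \<Rightarrow> real^'m::finite \<Rightarrow> real^('k + 'm)" where
  "ejoin b g = (\<chi> i. case i of Inl a \<Rightarrow> b$a | Inr j \<Rightarrow> g$j)"

lemma vfst_ejoin[simp]: "vfst (ejoin b g) = b" by (simp add: vfst_def ejoin_def vec_eq_iff)
lemma vsnd_ejoin[simp]: "vsnd (ejoin b g) = g" by (simp add: vsnd_def ejoin_def vec_eq_iff)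
lemma ejoin_eq_iff: "\<beta> = ejoin b g \<longleftrightarrow> vfst \<beta> = b \<and> vsnd \<beta> = g"
  by (auto simp: vfst_def vsnd_def ejoin_def vec_eq_iff split: sum.split)
lemma vfst_add[simp]: "vfst (a + b) = vfst a + vfst b" by (simp add: vfst_def vec_eq_iff)
lemma vsnd_add[simp]: "vsnd (a + b) = vsnd a + vsnd b" by (simp add: vsnd_def vec_eq_iff)
lemma vfst_diff[simp]: "vfst (a - b) = vfst a - vfst b" by (simp add: vfst_def vec_eq_iff)
lemma vsnd_diff[simp]: "vsnd (a - b) = vsnd a - vsnd b" by (simp add: vsnd_def vec_eq_iff)
lemma vfst_scale[simp]: "vfst (c *\<^sub>R a) = c *\<^sub>R vfst a" by (simp add: vfst_def vec_eq_iff)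
lemma vsnd_scale[simp]: "vsnd (c *\<^sub>R a) = c *\<^sub>R vsnd a" by (simp add: vsnd_def vec_eq_iff)

lemma sum_UNIV_Plus:
  "(\<Sum>i\<in>(UNIV::('a::finite+'b::finite) set). f i) = (\<Sum>a\<in>UNIV. f (Inl a)) + (\<Sum>b\<in>UNIV. f (Inr b))"
  using sum.Plus[of "UNIV::'a set" "UNIV::'b set" f] by (simp add: comp_def)

lemma Xmul: "X *v \<beta> = blk1 X *v vfst \<beta> + blk2 X *v vsnd \<beta>"
  by (simp add: vec_eq_iff matrix_vector_mult_def sum_UNIV_Plus blk1_def blk2_def vfst_def vsnd_def)

lemma obj_split: "lasso_obj X y lam (ejoin b g) = sub_obj X y lam b g + lam * norm b"
  by (simp add: lasso_obj_def sub_obj_def Xmul diff_diff_add algebra_simps)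

lemma norm2_comb:
  fixes u v :: "'a::real_inner"
  shows "(norm ((1-t) *\<^sub>R u + t *\<^sub>R v))\<^sup>2 = (1-t) * (norm u)\<^sup>2 + t * (norm v)\<^sup>2 - t*(1-t) * (norm (u - v))\<^sup>2"
  by (simp add: power2_norm_eq_inner inner_add_left inner_add_right inner_diff_left inner_diff_right inner_commute algebra_simps)

lemma l1_conv:
  assumes "0 \<le> t" "t \<le> 1"
  shows "l1norm ((1-t) *\<^sub>R a + t *\<^sub>R b) \<le> (1-t) * l1norm a + t * l1norm b"
proof -
  have "\<bar>(1-t) * a$j + t * b$j\<bar> \<le> (1-t) * \<bar>a$j\<bar> + t * \<bar>b$j\<bar>" for j
    using assms by (metis abs_mult abs_of_nonneg abs_triangle_ineq diff_ge_0_iff_ge)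
  then show ?thesis by (simp add: l1norm_def sum_distrib_left sum.distrib[symmetric] sum_mono)
qed

lemma norm_conv:
  fixes a b :: "'a::real_normed_vector"
  assumes "0 \<le> t" "t \<le> 1"
  shows "norm ((1-t) *\<^sub>R a + t *\<^sub>R b) \<le> (1-t) * norm a + t * norm b"
  using assms norm_triangle_ineq[of "(1-t) *\<^sub>R a" "t *\<^sub>R b"] by simp

lemma conv_aux:
  fixes Q P c t :: real
  assumes "Q = (1-t)*Qa + t*Qb - t*(1-t)*K" "P \<le> (1-t)*Pa + t*Pb"
  shows "c*Q + P \<le> (1-t)*(c*Qa + Pa) + t*(c*Qb+Pb) - c*(t*(1-t))*K"
proof -
  have "c*Q = (1-t)*(c*Qa) + t*(c*Qb) - c*(t*(1-t))*K" unfolding assms(1) by (simp add: algebra_simps)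
  then show ?thesis using assms(2) by (simp add: algebra_simps)
qed

lemma conv_ineq:
  fixes X :: "real^('k::finite + 'm::finite)^'n::finite"
  assumes "0 \<le> t" "t \<le> 1" "lam \<ge> 0"
  shows "lasso_obj X y lam ((1-t) *\<^sub>R a + t *\<^sub>R b) \<le> (1-t) * lasso_obj X y lam a + t * lasso_obj X y lam b
     - 1 / (2 * real CARD('n)) * (t*(1-t)) * (norm (X *v (a - b)))\<^sup>2"
proof -
  have e: "y - X *v ((1-t) *\<^sub>R a + t *\<^sub>R b) = (1-t) *\<^sub>R (y - X *v a) + t *\<^sub>R (y - X *v b)"
    by (simp add: algebra_simps)
  have d: "(y - X *v a) - (y - X *v b) = - (X *v (a - b))" by (simp add: algebra_simps)
  have q: "(norm (y - X *v ((1-t) *\<^sub>R a + t *\<^sub>R b)))\<^sup>2 = (1-t) * (norm (y - X *v a))\<^sup>2 + t * (norm (y - X *v b))\<^sup>2 - t*(1-t) * (norm (X *v (a - b)))\<^sup>2"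
    unfolding e norm2_comb d by simp
  have p: "norm (vfst ((1-t) *\<^sub>R a + t *\<^sub>R b)) + l1norm (vsnd ((1-t) *\<^sub>R a + t *\<^sub>R b))
      \<le> (1-t) * (norm (vfst a) + l1norm (vsnd a)) + t * (norm (vfst b) + l1norm (vsnd b))"
    using norm_conv[OF assms(1,2), of "vfst a" "vfst b"] l1_conv[OF assms(1,2), of "vsnd a" "vsnd b"]
    by (simp add: algebra_simps)
  have p2: "lam * (norm (vfst ((1-t) *\<^sub>R a + t *\<^sub>R b)) + l1norm (vsnd ((1-t) *\<^sub>R a + t *\<^sub>R b)))
      \<le> lam * ((1-t) * (norm (vfst a) + l1norm (vsnd a)) + t * (norm (vfst b) + l1norm (vsnd b)))"
    by (rule mult_left_mono[OF p assms(3)])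
  then have p3: "lam * (norm (vfst ((1-t) *\<^sub>R a + t *\<^sub>R b)) + l1norm (vsnd ((1-t) *\<^sub>R a + t *\<^sub>R b)))
      \<le> (1-t) * (lam * (norm (vfst a) + l1norm (vsnd a))) + t * (lam * (norm (vfst b) + l1norm (vsnd b)))"
    by (simp add: algebra_simps)
  show ?thesis unfolding lasso_obj_def by (rule conv_aux[OF q p3])
qed


lemma uniq_min:
  fixes X :: "real^('k::finite + 'm::finite)^'n::finite"
  assumes inj: "inj ((*v) X)" and lam: "lam \<ge> 0"
    and m1: "\<forall>\<beta>. lasso_obj X y lam b1 \<le> lasso_obj X y lam \<beta>"
    and m2: "\<forall>\<beta>. lasso_obj X y lam b2 \<le> lasso_obj X y lam \<beta>"
  shows "b1 = b2"
proof -
  let ?F = "lasso_obj X y lam"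
  let ?m = "(1 - 1/2) *\<^sub>R b1 + (1/2) *\<^sub>R b2"
  have c: "?F ?m \<le> (1-1/2) * ?F b1 + (1/2) * ?F b2 - 1 / (2 * real CARD('n)) * ((1/2)*(1-1/2)) * (norm (X *v (b1 - b2)))\<^sup>2"
    by (rule conv_ineq) (use lam in auto)
  define Q where "Q = (norm (X *v (b1 - b2)))\<^sup>2 / (8 * real CARD('n))"
  have e: "(1-1/2) * ?F b1 + (1/2) * ?F b2 - 1 / (2 * real CARD('n)) * ((1/2)*(1-1/2)) * (norm (X *v (b1 - b2)))\<^sup>2 = ?F b1 - Q"
    using m1 m2 unfolding Q_def by (simp add: antisym field_simps)
  have "?F b1 \<le> ?F ?m" using m1 by auto
  with c e have "Q \<le> 0" by linarith
  then have "(norm (X *v (b1 - b2)))\<^sup>2 / (8 * real CARD('n)) \<le> 0" by (simp add: Q_def)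
  then have "(norm (X *v (b1 - b2)))\<^sup>2 \<le> 0" by (simp add: divide_le_0_iff)
  then have "X *v (b1 - b2) = 0" by simp
  then have "X *v b1 = X *v b2" by (simp add: matrix_vector_mult_diff_distrib)
  with inj show ?thesis by (simp add: inj_eq)
qed

definition e1 :: "real^'k::finite \<Rightarrow> real^('k + 'm::finite)" where
  "e1 h = ejoin h 0"

lemma norm2_diff:
  fixes u v :: "'a::real_inner"
  shows "(norm (u - t *\<^sub>R v))\<^sup>2 = (norm u)\<^sup>2 - 2 * t * inner u v + t\<^sup>2 * (norm v)\<^sup>2"
proof -
  have "(norm (u - t *\<^sub>R v))\<^sup>2 = inner (u - t *\<^sub>R v) (u - t *\<^sub>R v)" by (rule power2_norm_eq_inner)
  also have "\<dots> = inner u u - 2 * t * inner u v + t\<^sup>2 * inner v v"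
    by (simp add: inner_diff_left inner_diff_right inner_commute[of v u] power2_eq_square algebra_simps)
  finally show ?thesis by (simp add: power2_norm_eq_inner)
qed

lemma step_eq:
  fixes X :: "real^('k::finite + 'm::finite)^'n::finite"
  shows "lasso_obj X y lam (\<beta> + t *\<^sub>R e1 h) = lasso_obj X y lam \<beta>
     + 1 / (2 * real CARD('n)) * (- 2 * t * inner (y - X *v \<beta>) (blk1 X *v h) + t\<^sup>2 * (norm (blk1 X *v h))\<^sup>2)
     + lam * (norm (vfst \<beta> + t *\<^sub>R h) - norm (vfst \<beta>))"
proof -
  have xe: "X *v e1 h = blk1 X *v h" by (simp add: Xmul e1_def)
  have r: "y - X *v (\<beta> + t *\<^sub>R e1 h) = (y - X *v \<beta>) - t *\<^sub>R (blk1 X *v h)"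
    by (simp add: matrix_vector_right_distrib matrix_vector_mult_scaleR xe)
  have n: "(norm ((y - X *v \<beta>) - t *\<^sub>R (blk1 X *v h)))\<^sup>2 = (norm (y - X *v \<beta>))\<^sup>2 - 2 * t * inner (y - X *v \<beta>) (blk1 X *v h) + t\<^sup>2 * (norm (blk1 X *v h))\<^sup>2"
    by (rule norm2_diff)
  have v: "vfst (\<beta> + t *\<^sub>R e1 h) = vfst \<beta> + t *\<^sub>R h" "vsnd (\<beta> + t *\<^sub>R e1 h) = vsnd \<beta>"
    by (simp_all add: e1_def)
  show ?thesis unfolding lasso_obj_def r n v by (simp add: algebra_simps)
qed

lemma inner_blk:
  fixes r :: "real^'n::finite" and A :: "real^'k::finite^'n"
  shows "inner r (A *v h) = inner (transpose A *v r) h"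
  using dot_lmul_matrix[of r A h] by simp

lemma lim0:
  fixes A B C :: real
  assumes "\<And>t. 0 < t \<Longrightarrow> t \<le> 1 \<Longrightarrow> A \<le> B + t * C"
  shows "A \<le> B"
proof (rule ccontr)
  assume "\<not> A \<le> B"
  then have d: "A - B > 0" by simp
  define K where "K = \<bar>C\<bar> + 1"
  have K: "K > 0" "C \<le> K" by (auto simp: K_def)
  define t where "t = min 1 ((A - B) / (2 * K))"
  have t0: "0 < t" "t \<le> 1" using d K by (auto simp: t_def)
  have "t * C \<le> t * K" using t0 K by (intro mult_left_mono) auto
  also have "\<dots> \<le> (A - B) / (2 * K) * K"
    by (intro mult_right_mono) (use K in \<open>auto simp: t_def\<close>)
  also have "\<dots> = (A - B) / 2" using K by simp
  finally have "t * C \<le> (A - B) / 2" .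
  then have "2 * (t * C) \<le> A - B" by simp
  with assms[OF t0] d show False by linarith
qed

lemma norm2_add:
  fixes u v :: "'a::real_inner"
  shows "(norm (u + t *\<^sub>R v))\<^sup>2 = (norm u)\<^sup>2 + 2 * t * inner u v + t\<^sup>2 * (norm v)\<^sup>2"
  using norm2_diff[of u "-t" v] by simp

lemma norm_upper:
  fixes b h :: "'a::real_inner"
  assumes "b \<noteq> 0"
  shows "norm (b + t *\<^sub>R h) \<le> norm b + t * inner b h / norm b + t\<^sup>2 * (norm h)\<^sup>2 / (2 * norm b)"
proof -
  let ?s = "norm (b + t *\<^sub>R h)" and ?nb = "norm b"
  have nb: "?nb > 0" using assms by simp
  have "2 * ?nb * ?s \<le> ?s\<^sup>2 + ?nb\<^sup>2" using sum_squares_bound[of ?s ?nb] by (simp add: algebra_simps)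
  also have "\<dots> = 2 * ?nb\<^sup>2 + 2 * t * inner b h + t\<^sup>2 * (norm h)\<^sup>2" by (simp add: norm2_add)
  finally have "2 * ?nb * ?s \<le> 2 * ?nb\<^sup>2 + 2 * t * inner b h + t\<^sup>2 * (norm h)\<^sup>2" .
  then have "?s \<le> (2 * ?nb\<^sup>2 + 2 * t * inner b h + t\<^sup>2 * (norm h)\<^sup>2) / (2 * ?nb)"
    using nb by (simp add: field_simps)
  also have "\<dots> = ?nb + t * inner b h / ?nb + t\<^sup>2 * (norm h)\<^sup>2 / (2 * ?nb)"
    using nb by (simp add: field_simps power2_eq_square)
  finally show ?thesis .
qed


lemma fo_ineq:
  fixes X :: "real^('k::finite + 'm::finite)^'n::finite"
  assumes m: "\<forall>\<beta>'. lasso_obj X y lam \<beta> \<le> lasso_obj X y lam \<beta>'" and t: "t > 0"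
  shows "0 \<le> 1 / (2 * real CARD('n)) * (- 2 * t * inner (transpose (blk1 X) *v (y - X *v \<beta>)) h + t\<^sup>2 * (norm (blk1 X *v h))\<^sup>2)
     + lam * (norm (vfst \<beta> + t *\<^sub>R h) - norm (vfst \<beta>))"
  using m[rule_format, of "\<beta> + t *\<^sub>R e1 h"] unfolding step_eq inner_blk by simp

lemma fo0:
  fixes X :: "real^('k::finite + 'm::finite)^'n::finite"
  assumes m: "\<forall>\<beta>'. lasso_obj X y lam \<beta> \<le> lasso_obj X y lam \<beta>'" and lam: "lam > 0" and b0: "vfst \<beta> = 0"
  shows "norm (transpose (blk1 X) *v (y - X *v \<beta>)) \<le> real CARD('n) * lam"
proof -
  let ?q = "transpose (blk1 X) *v (y - X *v \<beta>)"
  define N where "N = real CARD('n)"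
  have N: "N > 0" by (simp add: N_def)
  have key: "inner ?q h \<le> N * lam * norm h" for h
  proof -
    have "2 * (1 / (2 * N)) * inner ?q h \<le> lam * norm h + t * ((1 / (2 * N)) * (norm (blk1 X *v h))\<^sup>2)"
      if t: "0 < t" "t \<le> 1" for t
    proof -
      have "0 \<le> 1 / (2 * N) * (- 2 * t * inner ?q h + t\<^sup>2 * (norm (blk1 X *v h))\<^sup>2) + lam * (t * norm h)"
        using fo_ineq[OF m t(1), of h] b0 t by (simp add: N_def)
      also have "\<dots> = t * (lam * norm h + t * ((1 / (2 * N)) * (norm (blk1 X *v h))\<^sup>2) - 2 * (1 / (2 * N)) * inner ?q h)"
        by (simp add: algebra_simps power2_eq_square)
      finally show ?thesis using t by (simp add: zero_le_mult_iff)
    qed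
    then have "2 * (1 / (2 * N)) * inner ?q h \<le> lam * norm h" by (rule lim0)
    then show ?thesis using N by (simp add: field_simps)
  qed
  show ?thesis
  proof (cases "?q = 0")
    case True then show ?thesis using N lam by (simp add: N_def)
  next
    case False
    have "(norm ?q)\<^sup>2 \<le> N * lam * norm ?q" using key[of ?q] by (simp add: power2_norm_eq_inner)
    then show ?thesis using False by (simp add: N_def power2_eq_square)
  qed
qed

lemma fo1:
  fixes X :: "real^('k::finite + 'm::finite)^'n::finite"
  assumes m: "\<forall>\<beta>'. lasso_obj X y lam \<beta> \<le> lasso_obj X y lam \<beta>'" and lam: "lam > 0" and b0: "vfst \<beta> \<noteq> 0"
  shows "transpose (blk1 X) *v (y - X *v \<beta>) = (real CARD('n) * lam) *\<^sub>R ((1 / norm (vfst \<beta>)) *\<^sub>R vfst \<beta>)"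
proof -
  let ?q = "transpose (blk1 X) *v (y - X *v \<beta>)"
  let ?b = "vfst \<beta>"
  define N where "N = real CARD('n)"
  have N: "N > 0" by (simp add: N_def)
  have nb: "norm ?b > 0" using b0 by simp
  let ?p = "(N * lam) *\<^sub>R ((1 / norm ?b) *\<^sub>R ?b)"
  have key: "inner (?q - ?p) h \<le> 0" for h
  proof -
    have "2 * (1 / (2 * N)) * inner ?q h \<le> lam * inner ?b h / norm ?b + t * ((1 / (2 * N)) * (norm (blk1 X *v h))\<^sup>2 + lam * (norm h)\<^sup>2 / (2 * norm ?b))"
      if t: "0 < t" "t \<le> 1" for t
    proof -
      have "0 \<le> 1 / (2 * N) * (- 2 * t * inner ?q h + t\<^sup>2 * (norm (blk1 X *v h))\<^sup>2) + lam * (norm (?b + t *\<^sub>R h) - norm ?b)"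
        using fo_ineq[OF m t(1), of h] by (simp add: N_def)
      also have "\<dots> \<le> 1 / (2 * N) * (- 2 * t * inner ?q h + t\<^sup>2 * (norm (blk1 X *v h))\<^sup>2) + lam * (t * inner ?b h / norm ?b + t\<^sup>2 * (norm h)\<^sup>2 / (2 * norm ?b))"
        using norm_upper[OF b0, of t h] lam by (intro add_left_mono mult_left_mono) auto
      also have "\<dots> = t * (lam * inner ?b h / norm ?b + t * ((1 / (2 * N)) * (norm (blk1 X *v h))\<^sup>2 + lam * (norm h)\<^sup>2 / (2 * norm ?b)) - 2 * (1 / (2 * N)) * inner ?q h)"
        by (simp add: algebra_simps power2_eq_square)
      finally show ?thesis using t by (simp add: zero_le_mult_iff)
    qed
    then have "2 * (1 / (2 * N)) * inner ?q h \<le> lam * inner ?b h / norm ?b" by (rule lim0)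
    then have "inner ?q h \<le> N * lam * inner ?b h / norm ?b" using N by (simp add: field_simps)
    then show ?thesis by (simp add: inner_diff_left)
  qed
  have "inner (?q - ?p) (?q - ?p) \<le> 0" by (rule key)
  then have "inner (?q - ?p) (?q - ?p) = 0" using inner_ge_zero[of "?q - ?p"] by linarith
  then have "?q - ?p = 0" by (simp only: inner_eq_zero_iff)
  then have "?q = ?p" by (simp only: right_minus_eq)
  then show ?thesis unfolding N_def .
qed


lemma inner_aux: "inner (a - t *\<^sub>R v) w = inner a w - t * inner v w"
  by (simp add: inner_diff_left)

lemma vec_split: "vfst a = vfst b \<Longrightarrow> vsnd a = vsnd b \<Longrightarrow> a = b"
  by (metis ejoin_eq_iff)

lemma bk:
  fixes X :: "real^('k::finite + 'm::finite)^'n::finite"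
  assumes lam: "lam > 0" and gmin: "\<forall>\<gamma>. sub_obj X y lam b gb \<le> sub_obj X y lam b \<gamma>"
    and kkt: "transpose (blk1 X) *v (y - X *v ejoin b gb) = (real CARD('n) * lam) *\<^sub>R \<epsilon>"
    and eps: "norm \<epsilon> \<le> 1" "inner \<epsilon> b = norm b"
  shows "lasso_obj X y lam (ejoin b gb) \<le> lasso_obj X y lam \<beta>'"
proof (rule ccontr)
  let ?F = "lasso_obj X y lam"
  define \<beta>0 where "\<beta>0 = ejoin b gb"
  assume "\<not> ?F (ejoin b gb) \<le> ?F \<beta>'"
  then have dpos: "?F \<beta>0 - ?F \<beta>' > 0" by (simp add: \<beta>0_def)
  define \<delta> where "\<delta> = ?F \<beta>0 - ?F \<beta>'"
  define h1 where "h1 = vfst (\<beta>' - \<beta>0)"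
  define h2 where "h2 = vsnd (\<beta>' - \<beta>0)"
  define N where "N = real CARD('n)"
  have N: "N > 0" by (simp add: N_def)
  define c where "c = 1 / (2 * N)"
  have c: "c > 0" "2 * c * N = 1" using N by (auto simp: c_def)
  define P where "P = inner (blk2 X *v h2) (blk1 X *v h1)"
  have main: "\<delta> \<le> 0 + t * (2 * c * \<bar>P\<bar>)" if t: "0 < t" "t \<le> 1" for t
  proof -
    define \<beta>t where "\<beta>t = (1 - t) *\<^sub>R \<beta>0 + t *\<^sub>R \<beta>'"
    define \<beta>t' where "\<beta>t' = ejoin b (gb + t *\<^sub>R h2)"
    have "?F \<beta>t \<le> (1-t) * ?F \<beta>0 + t * ?F \<beta>' - 1 / (2 * real CARD('n)) * (t*(1-t)) * (norm (X *v (\<beta>0 - \<beta>')))\<^sup>2"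
      unfolding \<beta>t_def by (rule conv_ineq) (use t lam in auto)
    moreover have "0 \<le> 1 / (2 * real CARD('n)) * (t*(1-t)) * (norm (X *v (\<beta>0 - \<beta>')))\<^sup>2"
      using t by simp
    ultimately have up: "?F \<beta>t \<le> ?F \<beta>0 - t * \<delta>" by (simp add: \<delta>_def algebra_simps)
    have lo1: "?F \<beta>0 \<le> ?F \<beta>t'"
      using gmin unfolding \<beta>t'_def \<beta>0_def obj_split by simp
    have eq: "\<beta>t = \<beta>t' + t *\<^sub>R e1 h1"
      by (rule vec_split) (simp_all add: \<beta>t_def \<beta>t'_def e1_def h1_def h2_def \<beta>0_def algebra_simps)
    have vt: "vfst \<beta>t' = b" by (simp add: \<beta>t'_def)
    have st: "?F \<beta>t = ?F \<beta>t' + c * (- 2 * t * inner (y - X *v \<beta>t') (blk1 X *v h1) + t\<^sup>2 * (norm (blk1 X *v h1))\<^sup>2)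
        + lam * (norm (b + t *\<^sub>R h1) - norm b)"
      unfolding eq step_eq vt c_def N_def ..
    have r: "y - X *v \<beta>t' = (y - X *v \<beta>0) - t *\<^sub>R (blk2 X *v h2)"
      by (simp add: \<beta>t'_def \<beta>0_def Xmul algebra_simps matrix_vector_right_distrib matrix_vector_mult_scaleR)
    have i0: "inner (y - X *v \<beta>0) (blk1 X *v h1) = N * lam * inner \<epsilon> h1"
      unfolding inner_blk using kkt by (simp add: \<beta>0_def N_def)
    have ir: "inner (y - X *v \<beta>t') (blk1 X *v h1) = N * lam * inner \<epsilon> h1 - t * P"
      unfolding r inner_aux i0 P_def ..
    have cs: "inner \<epsilon> (b + t *\<^sub>R h1) \<le> norm (b + t *\<^sub>R h1)"
      using norm_cauchy_schwarz[of \<epsilon> "b + t *\<^sub>R h1"] eps(1)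
      by (meson dual_order.trans mult_left_le_one_le norm_ge_zero)
    then have nl: "norm b + t * inner \<epsilon> h1 \<le> norm (b + t *\<^sub>R h1)"
      using eps(2) by (simp add: inner_add_right)
    have lamt: "lam * (t * inner \<epsilon> h1) \<le> lam * (norm (b + t *\<^sub>R h1) - norm b)"
      using nl lam by (intro mult_left_mono) auto
    have K: "0 \<le> c * (t\<^sup>2 * (norm (blk1 X *v h1))\<^sup>2)" using c by simp
    have "?F \<beta>t = ?F \<beta>t' + c * (- 2 * t * (N * lam * inner \<epsilon> h1 - t * P)) + c * (t\<^sup>2 * (norm (blk1 X *v h1))\<^sup>2)
        + lam * (norm (b + t *\<^sub>R h1) - norm b)"
      unfolding st ir by (simp add: algebra_simps)
    also have "c * (- 2 * t * (N * lam * inner \<epsilon> h1 - t * P)) = - (2 * c * N) * lam * (t * inner \<epsilon> h1) + 2 * c * t\<^sup>2 * P"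
      by (simp add: algebra_simps power2_eq_square)
    also have "\<dots> = - lam * (t * inner \<epsilon> h1) + 2 * c * t\<^sup>2 * P" using c(2) by simp
    finally have "?F \<beta>t \<ge> ?F \<beta>t' + 2 * c * t\<^sup>2 * P" using lamt K by linarith
    then have "?F \<beta>0 + 2 * c * t\<^sup>2 * P \<le> ?F \<beta>0 - t * \<delta>" using lo1 up by linarith
    then have "t * \<delta> \<le> t * (t * (2 * c * (- P)))" by (simp add: algebra_simps power2_eq_square)
    then have "\<delta> \<le> t * (2 * c * (- P))" using t(1) by (metis mult_le_cancel_left_pos)
    also have "\<dots> \<le> t * (2 * c * \<bar>P\<bar>)" using t c by (intro mult_left_mono) auto
    finally show ?thesis by simp
  qed
  have "\<delta> \<le> 0" by (rule lim0[OF main])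
  with dpos show False by (simp add: \<delta>_def)
qed

lemma matrix_inv_both:
  assumes "invertible (A::real^'n::finite^'n)"
  shows "A ** matrix_inv A = mat 1" "matrix_inv A ** A = mat 1"
proof -
  have "\<exists>A'. A ** A' = mat 1 \<and> A' ** A = mat 1" using assms by (simp add: invertible_def)
  then have "A ** matrix_inv A = mat 1 \<and> matrix_inv A ** A = mat 1"
    unfolding matrix_inv_def by (rule someI_ex)
  then show "A ** matrix_inv A = mat 1" "matrix_inv A ** A = mat 1" by auto
qed

lemma kkt_equiv:
  fixes X :: "real^('k::{finite,wellorder} + 'm::finite)^'n::finite"
  assumes inj: "inj ((*v) X)" and sig: "sigk X y > 0"
  shows "u1 X y = Lam X y lam g b \<epsilon> \<longleftrightarrow>
    transpose (blk1 X) *v (y - X *v ejoin b (g b)) = (real CARD('n) * lam) *\<^sub>R \<epsilon>"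
proof -
  define w where "w = y - Pk X y"
  define M where "M = transpose (blk1 X) ** V1 X"
  define a where "a = - (transpose (blk1 X) *v (Pk X y - blk1 X *v b - blk2 X *v g b)) + (real CARD('n) * lam) *\<^sub>R \<epsilon>"
  have worth: "inner w (column (Inr j) X) = 0" for j
    unfolding w_def Pk_def by (rule oproj_orth) (auto intro: span_base)
  have s: "sigk X y \<noteq> 0" using sig by simp
  have invM: "M ** matrix_inv M = mat 1" "matrix_inv M ** M = mat 1"
    using matrix_inv_both[OF M_inv[OF inj]] by (simp_all add: M_def)
  have L: "M *v (transpose (V1 X) *v w) = transpose (blk1 X) *v w"
    unfolding M_def by (rule L1[OF inj worth])
  have "u1 X y = Lam X y lam g b \<epsilon> \<longleftrightarrow> transpose (V1 X) *v w = matrix_inv M *v a"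
    unfolding u1_def Lam_def w_def[symmetric] M_def[symmetric] a_def[symmetric] using s by simp
  also have "\<dots> \<longleftrightarrow> M *v (transpose (V1 X) *v w) = a"
  proof
    assume "transpose (V1 X) *v w = matrix_inv M *v a"
    then show "M *v (transpose (V1 X) *v w) = a" by (simp only: matrix_vector_mul_assoc invM matrix_vector_mul_lid)
  next
    assume "M *v (transpose (V1 X) *v w) = a"
    then have "matrix_inv M *v (M *v (transpose (V1 X) *v w)) = matrix_inv M *v a" by simp
    moreover have "matrix_inv M *v (M *v v) = v" for v
      by (simp only: matrix_vector_mul_assoc invM matrix_vector_mul_lid)
    ultimately show "transpose (V1 X) *v w = matrix_inv M *v a" by simp
  qed
  also have "\<dots> \<longleftrightarrow> transpose (blk1 X) *v w = a" unfolding L ..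
  also have "\<dots> \<longleftrightarrow> transpose (blk1 X) *v w + transpose (blk1 X) *v (Pk X y - blk1 X *v b - blk2 X *v g b) = (real CARD('n) * lam) *\<^sub>R \<epsilon>"
    unfolding a_def by (auto simp: algebra_simps)
  also have "transpose (blk1 X) *v w + transpose (blk1 X) *v (Pk X y - blk1 X *v b - blk2 X *v g b) = transpose (blk1 X) *v (y - X *v ejoin b (g b))"
    unfolding w_def Xmul by (simp only: matrix_vector_right_distrib[symmetric]) (simp add: algebra_simps)
  finally show ?thesis .
qed


theorem theoremC8:
  fixes X :: "real^('k::{finite,wellorder} + 'm::finite)^'n::finite"
    and y :: "real^'n" and lam :: real
    and \<beta>hat :: "real^('k::{finite,wellorder} + 'm)"
    and g :: "real^'k::{finite,wellorder} \<Rightarrow> real^'m"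
  assumes "CARD('n) \<ge> CARD('k + 'm)"
    and "rank X = CARD('k + 'm)"
    and "lam > 0"
    and "sigk X y > 0"
    and "\<forall>\<beta>. lasso_obj X y lam \<beta>hat \<le> lasso_obj X y lam \<beta>"
    and "\<forall>b \<gamma>. sub_obj X y lam b (g b) \<le> sub_obj X y lam b \<gamma>"
  shows "\<forall>b. vfst \<beta>hat = b \<longleftrightarrow> u1 X y \<in> finv X y lam g b"
proof
  fix b
  let ?F = "lasso_obj X y lam"
  let ?KK = "\<lambda>\<epsilon>. transpose (blk1 X) *v (y - X *v ejoin b (g b)) = (real CARD('n) * lam) *\<^sub>R \<epsilon>"
  have inj: "inj ((*v) X)" using assms(2) full_rank_injective[of X] by simp
  have lam: "lam > 0" and lam0: "lam \<ge> 0" using assms(3) by auto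
  have mhat: "\<forall>\<beta>. ?F \<beta>hat \<le> ?F \<beta>" by (rule assms(5))
  have gmin: "\<forall>\<gamma>. sub_obj X y lam b (g b) \<le> sub_obj X y lam b \<gamma>" using assms(6) by blast
  have KE: "u1 X y = Lam X y lam g b \<epsilon> \<longleftrightarrow> ?KK \<epsilon>" for \<epsilon>
    by (rule kkt_equiv[OF inj assms(4)])
  have fromKK: "vfst \<beta>hat = b" if e: "?KK \<epsilon>" "norm \<epsilon> \<le> 1" "inner \<epsilon> b = norm b" for \<epsilon>
  proof -
    have "\<forall>\<beta>'. ?F (ejoin b (g b)) \<le> ?F \<beta>'"
      using bk[OF lam gmin e(1) e(2) e(3)] by blast
    then have "ejoin b (g b) = \<beta>hat" using uniq_min[OF inj lam0 _ mhat] by blast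
    then show ?thesis by (metis vfst_ejoin)
  qed
  show "vfst \<beta>hat = b \<longleftrightarrow> u1 X y \<in> finv X y lam g b"
  proof
    assume vb: "vfst \<beta>hat = b"
    have "?F (ejoin b (g b)) \<le> ?F \<beta>hat"
    proof -
      have "?F (ejoin b (g b)) = sub_obj X y lam b (g b) + lam * norm b" by (rule obj_split)
      also have "\<dots> \<le> sub_obj X y lam b (vsnd \<beta>hat) + lam * norm b" using gmin by simp
      also have "\<dots> = ?F (ejoin b (vsnd \<beta>hat))" by (rule obj_split[symmetric])
      also have "ejoin b (vsnd \<beta>hat) = \<beta>hat" using vb ejoin_eq_iff[of \<beta>hat b "vsnd \<beta>hat"] by simp
      finally show ?thesis .
    qed
    then have "\<forall>\<beta>. ?F (ejoin b (g b)) \<le> ?F \<beta>" using mhat by (meson order_trans)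
    then have bh: "\<beta>hat = ejoin b (g b)" using uniq_min[OF inj lam0 mhat] by blast
    show "u1 X y \<in> finv X y lam g b"
    proof (cases "b = 0")
      case False
      have "?KK ((1 / norm b) *\<^sub>R b)"
        using fo1[OF mhat lam] vb False bh by simp
      then show ?thesis using False KE by (simp add: finv_def)
    next
      case True
      define q where "q = transpose (blk1 X) *v (y - X *v ejoin b (g b))"
      have nq: "norm q \<le> real CARD('n) * lam" using fo0[OF mhat lam] vb True bh by (simp add: q_def)
      define \<epsilon> where "\<epsilon> = (1 / (real CARD('n) * lam)) *\<^sub>R q"
      have pos: "real CARD('n) * lam > 0" using lam by simp
      have "?KK \<epsilon>" using pos lam by (simp add: \<epsilon>_def q_def)
      moreover have "norm \<epsilon> \<le> 1" using nq pos by (simp add: \<epsilon>_def field_simps)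
      ultimately show ?thesis using True KE by (auto simp: finv_def)
    qed
  next
    assume u: "u1 X y \<in> finv X y lam g b"
    show "vfst \<beta>hat = b"
    proof (cases "b = 0")
      case False
      have "?KK ((1 / norm b) *\<^sub>R b)" using u False KE by (simp add: finv_def)
      moreover have "norm ((1 / norm b) *\<^sub>R b) \<le> 1" using False by simp
      moreover have "inner ((1 / norm b) *\<^sub>R b) b = norm b"
        using False by (simp add: power2_norm_eq_inner[symmetric] power2_eq_square)
      ultimately show ?thesis by (rule fromKK)
    next
      case True
      then obtain \<epsilon> where e: "norm \<epsilon> \<le> 1" "u1 X y = Lam X y lam g 0 \<epsilon>" using u by (auto simp: finv_def)
      have "?KK \<epsilon>" using e(2) True KE[of \<epsilon>] by simp
      moreover have "inner \<epsilon> b = norm b" using True by simp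
      ultimately show ?thesis using e(1) fromKK by blast
    qed
  qed
qed

end
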